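(* Let $(G,t)$ be an infinite biosphere and let $S_1,S_2\subseteq G$ be infinite specieslike clusters. If $\mathrm{gen}(S_1)\cap\mathrm{gen}(S_2)$ is infinite, then $S_1\sim S_2$, i.e., the symmetric difference $\mathrm{gen}(S_1)\triangle\mathrm{gen}(S_2)$ is finite.
   Context: An infinite biosphere is a directed graph $G$ together with a function $t$ assigning a real number $t(v)$ (the birthdate) to each vertex $v$ of $G$, such that: (1) whenever there is an edge from $v$ to $w$ ($v$ is a parent of $w$, $w$ a child of $v$), $t(v)<t(w)$; (2) for every $r\in\mathbb R$, at most finitely many vertices $v$ have $t(v)<r$; (3) every vertex has at most finitely many children; (4) $G$ has infinitely many vertices. Subsets of $G$ are sets of vertices with the induced edges. $v$ is an ancestor of $w$ (and $w$ a descendant of $v$) if there is a sequence $v=v_1,\dots,v_n=w$ with $n>1$ such that each $v_i$ is a parent of $v_{i+1}$. A set $S\subseteq G$ satisfies the identical ancestor point axiom if there is no $v\in S$ such that $S$ contains both infinitely many descendants of $v$ and infinitely many non-descendants of $v$. $S$ satisfies the convexity axiom if for every $v\in G$, if $v$ has an ancestor in $S$ and a descendant in $S$, then $v\in S$. A specieslike cluster is a subset $S\subseteq G$ that is connected (as an undirected graph, with the induced edges), satisfies the identical ancestor point axiom, and satisfies the convexity axiom. A vertex $v\in S$ is a generator of $S$ if $S$ contains at most finitely many non-descendants of $v$; $\mathrm{gen}(S)$ is the set of generators of $S$. For infinite $S_1,S_2\subseteq G$, $S_1\sim S_2$ means $\mathrm{gen}(S_1)\triangle\mathrm{gen}(S_2)$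 is finite. *)

theory Defs
  imports Complex_Main
begin

text \<open>A directed graph with vertex set V and edge relation E (E v w: v is a parent of w),
  together with birthdates t.\<close>

definition infinite_biosphere :: "'v set \<Rightarrow> ('v \<Rightarrow> 'v \<Rightarrow> bool) \<Rightarrow> ('v \<Rightarrow> real) \<Rightarrow> bool" where
  "infinite_biosphere V E t \<longleftrightarrow>
     (\<forall>v w. E v w \<longrightarrow> v \<in> V \<and> w \<in> V) \<and>
     (\<forall>v w. E v w \<longrightarrow> t v < t w) \<and>
     (\<forall>r::real. finite {v \<in> V. t v < r}) \<and>
     (\<forall>v \<in> V. finite {w. E v w}) \<and>
     infinite V"

definition ancestor :: "('v \<Rightarrow> 'v \<Rightarrow> bool) \<Rightarrow> 'v \<Rightarrow> 'v \<Rightarrow> bool" where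
  "ancestor E v w \<longleftrightarrow> E\<^sup>+\<^sup>+ v w"

definition descendants :: "('v \<Rightarrow> 'v \<Rightarrow> bool) \<Rightarrow> 'v \<Rightarrow> 'v set" where
  "descendants E v = {w. ancestor E v w}"

definition connected_in :: "('v \<Rightarrow> 'v \<Rightarrow> bool) \<Rightarrow> 'v set \<Rightarrow> bool" where
  "connected_in E S \<longleftrightarrow>
     (\<forall>x \<in> S. \<forall>y \<in> S. (\<lambda>a b. a \<in> S \<and> b \<in> S \<and> (E a b \<or> E b a))\<^sup>*\<^sup>* x y)"

definition identical_ancestor_point_axiom :: "('v \<Rightarrow> 'v \<Rightarrow> bool) \<Rightarrow> 'v set \<Rightarrow> bool" where
  "identical_ancestor_point_axiom E S \<longleftrightarrow>
     \<not> (\<exists>v \<in> S. infinite (S \<inter> descendants E v) \<and> infinite (S - descendants E v))"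

definition convexity_axiom :: "'v set \<Rightarrow> ('v \<Rightarrow> 'v \<Rightarrow> bool) \<Rightarrow> 'v set \<Rightarrow> bool" where
  "convexity_axiom V E S \<longleftrightarrow>
     (\<forall>v \<in> V. (\<exists>a \<in> S. ancestor E a v) \<and> (\<exists>d \<in> S. ancestor E v d) \<longrightarrow> v \<in> S)"

definition specieslike_cluster :: "'v set \<Rightarrow> ('v \<Rightarrow> 'v \<Rightarrow> bool) \<Rightarrow> 'v set \<Rightarrow> bool" where
  "specieslike_cluster V E S \<longleftrightarrow>
     S \<subseteq> V \<and> connected_in E S \<and> identical_ancestor_point_axiom E S \<and> convexity_axiom V E S"

definition gen :: "('v \<Rightarrow> 'v \<Rightarrow> bool) \<Rightarrow> 'v set \<Rightarrow> 'v set" where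
  "gen E S = {v \<in> S. finite (S - descendants E v)}"

definition cluster_equiv :: "('v \<Rightarrow> 'v \<Rightarrow> bool) \<Rightarrow> 'v set \<Rightarrow> 'v set \<Rightarrow> bool" where
  "cluster_equiv E S1 S2 \<longleftrightarrow> finite ((gen E S1 - gen E S2) \<union> (gen E S2 - gen E S1))"

end

theory Submission
  imports Defs
begin

lemma half:
  assumes "S1 \<subseteq> V" and "convexity_axiom V E S2" and "identical_ancestor_point_axiom E S2"
    and "w \<in> gen E S1" and "w \<in> gen E S2" and "infinite (S1 \<inter> S2)"
  shows "gen E S1 - gen E S2 \<subseteq> S1 - descendants E w"
proof
  fix x assume x: "x \<in> gen E S1 - gen E S2"
  hence xS1: "x \<in> S1" and fx: "finite (S1 - descendants E x)" by (auto simp: gen_def)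
  show "x \<in> S1 - descendants E w"
  proof (rule ccontr)
    assume "x \<notin> S1 - descendants E w"
    hence xd: "x \<in> descendants E w" using xS1 by blast
    have sub: "(S1 \<inter> S2) - (S1 - descendants E x) \<subseteq> S2 \<inter> descendants E x" by blast
    have inf: "infinite ((S1 \<inter> S2) - (S1 - descendants E x))"
      using assms(6) fx by (meson Diff_infinite_finite)
    hence inf2: "infinite (S2 \<inter> descendants E x)" using finite_subset[OF sub] by blast
    then obtain d where "d \<in> S2" "d \<in> descendants E x" by (metis IntE all_not_in_conv finite.emptyI)
    moreover have "w \<in> S2" using assms(5) by (simp add: gen_def)
    ultimately have "x \<in> S2" using assms(2) assms(1) xS1 xd
      unfolding convexity_axiom_def descendants_def by blast
    hence "finite (S2 - descendants E x)" using assms(3) inf2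
      unfolding identical_ancestor_point_axiom_def by blast
    hence "x \<in> gen E S2" using \<open>x \<in> S2\<close> by (simp add: gen_def)
    thus False using x by blast
  qed
qed

theorem mainTheorem2:
  fixes V :: "'v set" and E :: "'v \<Rightarrow> 'v \<Rightarrow> bool" and t :: "'v \<Rightarrow> real"
    and S1 S2 :: "'v set"
  assumes "infinite_biosphere V E t"
    and "specieslike_cluster V E S1" and "infinite S1"
    and "specieslike_cluster V E S2" and "infinite S2"
    and "infinite (gen E S1 \<inter> gen E S2)"
  shows "cluster_equiv E S1 S2"
proof -
  obtain w where w: "w \<in> gen E S1 \<inter> gen E S2" using assms(6) by (metis ex_in_conv finite.emptyI)
  have "gen E S1 \<inter> gen E S2 \<subseteq> S1 \<inter> S2" by (auto simp: gen_def)
  hence inf: "infinite (S1 \<inter> S2)" using assms(6) finite_subset by metis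
  hence inf': "infinite (S2 \<inter> S1)" by (simp add: Int_commute)
  have f1: "finite (S1 - descendants E w)" and f2: "finite (S2 - descendants E w)"
    using w by (auto simp: gen_def)
  have a: "gen E S1 - gen E S2 \<subseteq> S1 - descendants E w"
    using half[of S1 V E S2 w] assms(2,4) w inf unfolding specieslike_cluster_def by blast
  have b: "gen E S2 - gen E S1 \<subseteq> S2 - descendants E w"
    using half[of S2 V E S1 w] assms(2,4) w inf' unfolding specieslike_cluster_def by blast
  show ?thesis unfolding cluster_equiv_def
    using finite_subset[OF a f1] finite_subset[OF b f2] by simp
qed

end
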